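(* Let $n,m,k,t\ge 1$ and $r\ge 0$ be integers with $m=\lceil k/t\rceil + r$ and $n\ge tm$. Then the minimum total storage of an ${\sf ECBC}(n,m,k,t,r)$ is $$N(n,m,k,t,r)=m\bigl(n-t(m-r-1)\bigr)=tm(r+1)+m(n-tm).$$
   Context: An Erasure Combinatorial Batch Code ${\sf ECBC}(n,m,k,t,r)$ is a family of $m$ subsets $S_1,\dots,S_m$ (the contents of $m$ servers) of the file set $X=\{1,\dots,n\}$ such that for every subset $X'\subseteq X$ with $|X'|\le k$ and every subset $J\subseteq\{1,\dots,m\}$ with $|J|\ge m-r$, there exist subsets $C_j\subseteq S_j$ ($j\in J$) with $|C_j|\le t$ and $X'=\bigcup_{j\in J}C_j$. Its total storage is $N=\sum_{i=1}^m|S_i|$, and $N(n,m,k,t,r)$ denotes the minimum total storage over all ${\sf ECBC}(n,m,k,t,r)$. *)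

theory Defs
  imports Main
begin

text \<open>An ECBC(n,m,k,t,r): servers indexed by {0..<m}, server j stores S j \<subseteq> {1..n}.\<close>

definition ECBC :: "nat \<Rightarrow> nat \<Rightarrow> nat \<Rightarrow> nat \<Rightarrow> nat \<Rightarrow> (nat \<Rightarrow> nat set) \<Rightarrow> bool" where
  "ECBC n m k t r S \<longleftrightarrow>
     (\<forall>i<m. S i \<subseteq> {1..n}) \<and>
     (\<forall>X' J. X' \<subseteq> {1..n} \<and> card X' \<le> k \<and> J \<subseteq> {0..<m} \<and> card J \<ge> m - r \<longrightarrow>
        (\<exists>C. (\<forall>j\<in>J. C j \<subseteq> S j \<and> card (C j) \<le> t) \<and> X' = (\<Union>j\<in>J. C j)))"

definition storage :: "nat \<Rightarrow> (nat \<Rightarrow> nat set) \<Rightarrow> nat" where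
  "storage m S = (\<Sum>i<m. card (S i))"

definition min_storage :: "nat \<Rightarrow> nat \<Rightarrow> nat \<Rightarrow> nat \<Rightarrow> nat \<Rightarrow> nat" where
  "min_storage n m k t r = (LEAST N. \<exists>S. ECBC n m k t r S \<and> storage m S = N)"

end

theory Submission imports Defs begin
lemma hall:
  fixes N :: "'a \<Rightarrow> 'b set"
  assumes "finite X" "\<forall>x\<in>X. finite (N x)" "\<forall>Z\<subseteq>X. card Z \<le> card (\<Union>(N ` Z))"
  shows "\<exists>f. inj_on f X \<and> (\<forall>x\<in>X. f x \<in> N x)"
  using assms
proof (induction "card X" arbitrary: X N rule: less_induct)
  case less
  show ?case
  proof (cases "X = {}")
    case True then show ?thesis by auto
  next
    case False
    show ?thesis
    proof (cases "\<exists>Z. Z \<subseteq> X \<and> Z \<noteq> {} \<and> Z \<noteq> X \<and> card (\<Union>(N ` Z)) \<le> card Z")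
      case True
      then obtain Z where Z: "Z \<subseteq> X" "Z \<noteq> {}" "Z \<noteq> X" "card (\<Union>(N ` Z)) \<le> card Z" by blast
      define U where "U = \<Union>(N ` Z)"
      have fZ: "finite Z" using Z(1) less.prems(1) finite_subset by blast
      have cU: "card U = card Z" using Z(4) less.prems(3) Z(1) U_def by force
      have fU: "finite U" unfolding U_def using fZ Z(1) less.prems(2) by blast
      have "card Z < card X" using Z less.prems(1) psubset_card_mono by blast
      then obtain f1 where f1: "inj_on f1 Z" "\<forall>x\<in>Z. f1 x \<in> N x"
      proof -
        have a1: "\<forall>x\<in>Z. finite (N x)" using less.prems(2) Z(1) by blast
        have a2: "\<forall>W\<subseteq>Z. card W \<le> card (\<Union>(N ` W))" using less.prems(3) Z(1) by blast
        show ?thesis using less.hyps[OF \<open>card Z < card X\<close> fZ a1 a2] that by blast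
      qed
      define N2 where "N2 x = N x - U" for x
      have cXZ: "card (X - Z) < card X"
      proof -
        have "card (X - Z) = card X - card Z" using card_Diff_subset[OF fZ Z(1)] .
        moreover have "card Z > 0" using fZ Z(2) by (simp add: card_gt_0_iff)
        moreover have "card Z \<le> card X" using \<open>card Z < card X\<close> by simp
        ultimately show ?thesis by linarith
      qed
      have hall2: "\<forall>W\<subseteq>X-Z. card W \<le> card (\<Union>(N2 ` W))"
      proof (intro allI impI)
        fix W assume W: "W \<subseteq> X - Z"
        have fW: "finite W" using W less.prems(1) finite_subset by blast
        have sub: "\<Union>(N ` (W \<union> Z)) \<subseteq> \<Union>(N2 ` W) \<union> U" by (auto simp: N2_def U_def)
        have fin: "finite (\<Union>(N2 ` W))" using fW W less.prems(2) by (auto simp: N2_def)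
        have "card W + card Z = card (W \<union> Z)" using fW fZ W by (subst card_Un_disjoint) auto
        also have "\<dots> \<le> card (\<Union>(N ` (W \<union> Z)))"
        proof -
          have "W \<union> Z \<subseteq> X" using W Z(1) by blast
          then show ?thesis using less.prems(3) by blast
        qed
        also have "\<dots> \<le> card (\<Union>(N2 ` W) \<union> U)" using sub fin fU by (intro card_mono) auto
        also have "\<dots> \<le> card (\<Union>(N2 ` W)) + card U" by (rule card_Un_le)
        finally show "card W \<le> card (\<Union>(N2 ` W))" using cU by linarith
      qed
      obtain f2 where f2: "inj_on f2 (X-Z)" "\<forall>x\<in>X-Z. f2 x \<in> N2 x"
        using less.hyps[OF cXZ, of N2] less.prems hall2 by (auto simp: N2_def)
      define f where "f x = (if x \<in> Z then f1 x else f2 x)" for x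
      have "inj_on f X"
      proof (rule inj_onI)
        fix x y assume xy: "x \<in> X" "y \<in> X" "f x = f y"
        show "x = y"
        proof (cases "x \<in> Z"; cases "y \<in> Z")
          assume "x \<in> Z" "y \<in> Z" then show ?thesis using xy f1 by (auto simp: f_def inj_on_def)
        next
          assume "x \<notin> Z" "y \<notin> Z" then show ?thesis using xy f2 by (auto simp: f_def inj_on_def)
        next
          assume a: "x \<in> Z" "y \<notin> Z"
          then have "f1 x \<in> U" using f1 U_def by auto
          moreover have "f2 y \<notin> U" using f2 a xy by (auto simp: N2_def)
          ultimately show ?thesis using xy a by (auto simp: f_def)
        next
          assume a: "x \<notin> Z" "y \<in> Z"
          then have "f1 y \<in> U" using f1 U_def by auto
          moreover have "f2 x \<notin> U" using f2 a xy by (auto simp: N2_def)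
          ultimately show ?thesis using xy a by (auto simp: f_def)
        qed
      qed
      moreover have "\<forall>x\<in>X. f x \<in> N x" using f1 f2 by (auto simp: f_def N2_def)
      ultimately show ?thesis by blast
    next
      case False
      then have strict: "\<And>Z. Z \<subseteq> X \<Longrightarrow> Z \<noteq> {} \<Longrightarrow> Z \<noteq> X \<Longrightarrow> card Z < card (\<Union>(N ` Z))"
        by (meson not_le)
      obtain x where x: "x \<in> X" using \<open>X \<noteq> {}\<close> by blast
      have "card {x} \<le> card (N x)" 
      proof -
        have "{x} \<subseteq> X" using x by blast
        then have "card {x} \<le> card (\<Union>(N ` {x}))" using less.prems(3) by blast
        then show ?thesis by simp
      qed
      then have "N x \<noteq> {}" by auto
      then obtain y where y: "y \<in> N x" by blast
      define N1 where "N1 z = N z - {y}" for z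
      have cX: "card (X - {x}) < card X" using x less.prems(1) by (metis card_Diff1_less)
      have hall1: "\<forall>W\<subseteq>X-{x}. card W \<le> card (\<Union>(N1 ` W))"
      proof (intro allI impI)
        fix W assume W: "W \<subseteq> X - {x}"
        show "card W \<le> card (\<Union>(N1 ` W))"
        proof (cases "W = {}")
          case True then show ?thesis by simp
        next
          case False
          have fW: "finite W" using W less.prems(1) finite_subset by blast
          have fin: "finite (\<Union>(N1 ` W))" using fW W less.prems(2) by (auto simp: N1_def)
          have "card W < card (\<Union>(N ` W))" using strict[of W] W False x by auto
          also have "\<dots> \<le> card (insert y (\<Union>(N1 ` W)))" using fin by (intro card_mono) (auto simp: N1_def)
          also have "\<dots> \<le> card (\<Union>(N1 ` W)) + 1" using fin by (simp add: card_insert_if)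
          finally show ?thesis by simp
        qed
      qed
      obtain f1 where f1: "inj_on f1 (X-{x})" "\<forall>z\<in>X-{x}. f1 z \<in> N1 z"
        using less.hyps[OF cX, of N1] less.prems hall1 by (auto simp: N1_def)
      define f where "f = f1(x := y)"
      have "inj_on f (X - {x})" using f1 by (auto simp: f_def inj_on_def)
      moreover have "y \<notin> f ` (X - {x})" using f1 by (auto simp: f_def N1_def)
      moreover have "f x = y" by (simp add: f_def)
      ultimately have "inj_on f (insert x (X - {x}))" by (subst inj_on_insert) auto
      then have "inj_on f X" using insert_Diff[OF x] by simp
      moreover have "\<forall>z\<in>X. f z \<in> N z" using f1 y by (auto simp: f_def N1_def)
      ultimately show ?thesis by blast
    qed
  qed
qed

lemma cap_hall:
  fixes S :: "nat \<Rightarrow> nat set" and X J :: "nat set" and t :: nat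
  assumes "finite X" "finite J" "\<forall>Z\<subseteq>X. card Z \<le> t * card {s\<in>J. \<exists>x\<in>Z. x \<in> S s}"
  shows "\<exists>C. (\<forall>j\<in>J. C j \<subseteq> S j \<and> card (C j) \<le> t) \<and> X = (\<Union>j\<in>J. C j)"
proof -
  define N where "N x = {(s,c). s \<in> J \<and> x \<in> S s \<and> c < t}" for x
  have U: "\<Union>(N ` Z) = {s\<in>J. \<exists>x\<in>Z. x \<in> S s} \<times> {..<t}" for Z
    by (auto simp: N_def)
  have fN: "\<forall>x\<in>X. finite (N x)"
  proof
    fix x show "finite (N x)"
      by (rule finite_subset[of _ "J \<times> {..<t}"]) (auto simp: N_def assms(2))
  qed
  have h: "\<forall>Z\<subseteq>X. card Z \<le> card (\<Union>(N ` Z))"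
  proof (intro allI impI)
    fix Z assume "Z \<subseteq> X"
    then have "card Z \<le> t * card {s\<in>J. \<exists>x\<in>Z. x \<in> S s}" using assms(3) by blast
    also have "\<dots> = card (\<Union>(N ` Z))" unfolding U by (simp add: card_cartesian_product)
    finally show "card Z \<le> card (\<Union>(N ` Z))" .
  qed
  obtain f where f: "inj_on f X" "\<forall>x\<in>X. f x \<in> N x" using hall[OF assms(1) fN h] by blast
  define C where "C j = {x\<in>X. fst (f x) = j}" for j
  have "\<forall>j\<in>J. C j \<subseteq> S j \<and> card (C j) \<le> t"
  proof
    fix j assume "j \<in> J"
    have "C j \<subseteq> S j" using f(2) by (auto simp: C_def N_def)
    moreover have "card (C j) \<le> t"
    proof -
      have inj: "inj_on f (C j)" using f(1) by (rule inj_on_subset) (auto simp: C_def)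
      have "f ` C j \<subseteq> {j} \<times> {..<t}" using f(2) by (auto simp: C_def N_def)
      then have "card (f ` C j) \<le> card ({j} \<times> {..<t})" by (intro card_mono) auto
      then show ?thesis using card_image[OF inj] by (simp add: card_cartesian_product)
    qed
    ultimately show "C j \<subseteq> S j \<and> card (C j) \<le> t" by blast
  qed
  moreover have "X = (\<Union>j\<in>J. C j)"
  proof
    show "X \<subseteq> (\<Union>j\<in>J. C j)"
    proof
      fix x assume x: "x \<in> X"
      then have "fst (f x) \<in> J" using f(2) by (auto simp: N_def)
      then show "x \<in> (\<Union>j\<in>J. C j)" using x by (auto simp: C_def)
    qed
  qed (auto simp: C_def)
  ultimately show ?thesis by blast
qed

definition cd :: "nat \<Rightarrow> nat \<Rightarrow> nat \<Rightarrow> nat" where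
  "cd m s b = (if b \<le> s then s - b else s + m - b)"

definition sc :: "nat \<Rightarrow> nat \<Rightarrow> nat" where
  "sc m a = (if Suc a = m then 0 else Suc a)"

lemma succ_exit:
  assumes "A \<subseteq> {0..<m}" "A \<noteq> {}" "A \<noteq> {0..<m}"
  shows "\<exists>a\<in>A. sc m a \<notin> A"
proof (rule ccontr)
  assume "\<not> ?thesis"
  then have cl: "\<And>a. a \<in> A \<Longrightarrow> sc m a \<in> A" by blast
  have run: "a \<in> A \<Longrightarrow> a + i < m \<Longrightarrow> a + i \<in> A" for a i
  proof (induction i)
    case 0 then show ?case by simp
  next
    case (Suc i)
    then have "a + i \<in> A" by simp
    then have "sc m (a + i) \<in> A" by (rule cl)
    then show ?case using Suc.prems by (simp add: sc_def)
  qed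
  obtain a0 where a0: "a0 \<in> A" using assms(2) by blast
  have "a0 < m" using a0 assms(1) by auto
  have e: "a0 + (m - 1 - a0) = m - 1" using \<open>a0 < m\<close> by simp
  have "a0 + (m - 1 - a0) \<in> A" using run[OF a0, of "m - 1 - a0"] e \<open>a0 < m\<close> by simp
  then have "m - 1 \<in> A" using e by simp
  then have "sc m (m - 1) \<in> A" by (rule cl)
  then have z: "0 \<in> A" using \<open>a0 < m\<close> by (simp add: sc_def)
  have "{0..<m} \<subseteq> A"
  proof
    fix i assume "i \<in> {0..<m}"
    then show "i \<in> A" using run[OF z, of i] by simp
  qed
  then show False using assms(1,3) by blast
qed

lemma sumset:
  assumes P: "P \<subseteq> {0..<m}" "P \<noteq> {}"
  shows "{s. s < m \<and> (\<exists>b\<in>P. cd m s b \<le> d)} = {0..<m} \<or>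
         card P + d \<le> card {s. s < m \<and> (\<exists>b\<in>P. cd m s b \<le> d)}"
proof (induction d)
  case 0
  have "{s. s < m \<and> (\<exists>b\<in>P. cd m s b \<le> 0)} = P" using P(1) by (auto simp: cd_def split: if_splits)
  then show ?case by simp
next
  case (Suc d)
  define A where "A = {s. s < m \<and> (\<exists>b\<in>P. cd m s b \<le> d)}"
  define B where "B = {s. s < m \<and> (\<exists>b\<in>P. cd m s b \<le> Suc d)}"
  have AB: "A \<subseteq> B" unfolding A_def B_def by (auto intro: le_SucI)
  have Bm: "B \<subseteq> {0..<m}" by (auto simp: B_def)
  show ?case
  proof (cases "B = {0..<m}")
    case True then show ?thesis by (simp add: B_def)
  next
    case False
    then have "A \<noteq> {0..<m}" using AB Bm by blast
    then have IH: "card P + d \<le> card A" using Suc.IH by (simp add: A_def)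
    have "P \<subseteq> A"
    proof
      fix x assume x: "x \<in> P"
      then have "x < m" "cd m x x \<le> d" using P(1) by (auto simp: cd_def)
      then show "x \<in> A" using x unfolding A_def by blast
    qed
    then have "A \<noteq> {}" using P(2) by blast
    moreover have "A \<subseteq> {0..<m}" by (auto simp: A_def)
    ultimately obtain a where a: "a \<in> A" "sc m a \<notin> A" using succ_exit \<open>A \<noteq> {0..<m}\<close> by blast
    from a(1) obtain b where b: "b \<in> P" "cd m a b \<le> d" "a < m" by (auto simp: A_def)
    have "b < m" using b(1) P(1) by auto
    then have "cd m (sc m a) b \<le> Suc d" using b(2,3) by (auto simp: cd_def sc_def split: if_splits)
    moreover have "sc m a < m" using b(3) by (auto simp: sc_def)
    ultimately have "sc m a \<in> B" using b(1) by (auto simp: B_def)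
    then have "insert (sc m a) A \<subseteq> B" using AB by blast
    then have "card (insert (sc m a) A) \<le> card B" by (intro card_mono) (auto simp: B_def)
    moreover have "card (insert (sc m a) A) = card A + 1" using a(2) by (simp add: A_def)
    ultimately show ?thesis using IH by (simp add: B_def)
  qed
qed

lemma lower_bound:
  fixes n m k t r q :: nat
  assumes E: "ECBC n m k t r S" and i: "i < m"
    and q: "m = q + r" "q \<ge> 1" "t * (q - 1) < k"
  shows "n - t * (q - 1) \<le> card (S i)"
proof (rule ccontr)
  assume "\<not> ?thesis"
  then have lt: "card (S i) < n - t * (q - 1)" by simp
  have Si: "S i \<subseteq> {1..n}" using E i by (simp add: ECBC_def)
  have "card ({1..n} - S i) = n - card (S i)" using Si by (simp add: card_Diff_subset finite_subset)
  then have "t * (q - 1) + 1 \<le> card ({1..n} - S i)" using lt by linarith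
  then obtain X where X: "X \<subseteq> {1..n} - S i" "card X = t * (q - 1) + 1"
    by (meson obtain_subset_with_card_n)
  have "card ({0..<m} - {i}) = m - 1" using i by simp
  then have "q - 1 \<le> card ({0..<m} - {i})" using q by simp
  then obtain K where K: "K \<subseteq> {0..<m} - {i}" "card K = q - 1"
    by (meson obtain_subset_with_card_n)
  have fK: "finite K" using K(1) by (rule finite_subset) simp
  define J where "J = insert i K"
  have "i \<notin> K" using K(1) by blast
  then have cJ: "card J = q" using K fK q(2) by (simp add: J_def)
  have "X \<subseteq> {1..n} \<and> card X \<le> k \<and> J \<subseteq> {0..<m} \<and> card J \<ge> m - r"
    using X K i q cJ by (auto simp: J_def)
  then obtain C where C: "\<forall>j\<in>J. C j \<subseteq> S j \<and> card (C j) \<le> t" "X = (\<Union>j\<in>J. C j)"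
    using E unfolding ECBC_def by blast
  have "X \<subseteq> (\<Union>j\<in>K. C j)"
  proof
    fix x assume x: "x \<in> X"
    then obtain j where j: "j \<in> J" "x \<in> C j" using C(2) by blast
    have "x \<notin> S i" using x X(1) by blast
    then have "j \<noteq> i" using j C(1) by (auto simp: J_def)
    then show "x \<in> (\<Union>j\<in>K. C j)" using j by (auto simp: J_def)
  qed
  then have "card X \<le> card (\<Union>j\<in>K. C j)"
  proof (rule card_mono[rotated])
    have "\<forall>j\<in>K. finite (C j)"
    proof
      fix j assume "j \<in> K"
      then have jm: "j < m" using K(1) by auto
      have "C j \<subseteq> S j" using C(1) \<open>j \<in> K\<close> by (auto simp: J_def)
      moreover have "S j \<subseteq> {1..n}" using E jm unfolding ECBC_def by blast
      ultimately have "C j \<subseteq> {1..n}" by blast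
      then show "finite (C j)" by (meson finite_atLeastAtMost finite_subset)
    qed
    then show "finite (\<Union>j\<in>K. C j)" using fK by blast
  qed
  also have "\<dots> \<le> (\<Sum>j\<in>K. card (C j))" by (rule card_UN_le[OF fK])
  also have "\<dots> \<le> (\<Sum>j\<in>K. t)" using C(1) by (intro sum_mono) (auto simp: J_def)
  also have "\<dots> = t * (q - 1)" using K(2) by simp
  finally show False using X(2) by simp
qed

lemma blk:
  fixes x t :: nat
  assumes "t \<ge> 1" "x \<ge> 1"
  shows "x \<in> {(x - 1) div t * t + 1 .. (x - 1) div t * t + t}"
proof -
  have e: "(x - 1) div t * t + (x - 1) mod t = x - 1" by (rule div_mult_mod_eq)
  have "(x - 1) mod t < t" using assms(1) by simp
  then show ?thesis using e assms(2) unfolding atLeastAtMost_iff by linarith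
qed

lemma blk_lt:
  fixes x t m :: nat
  assumes "t \<ge> 1" "x \<ge> 1" "x \<le> t * m"
  shows "(x - 1) div t < m"
proof -
  have "(x - 1) div t * t \<le> x - 1" by (rule div_times_less_eq_dividend)
  also have "\<dots> < m * t" using assms by (simp add: mult.commute)
  finally show ?thesis by simp
qed

definition S0 :: "nat \<Rightarrow> nat \<Rightarrow> nat \<Rightarrow> nat \<Rightarrow> nat \<Rightarrow> nat set" where
  "S0 n m t r i = {f \<in> {1..n}. t * m < f \<or> cd m i ((f - 1) div t) \<le> r}"

lemma card_S0:
  fixes n m t r i :: nat
  assumes "t \<ge> 1" "i < m" "t * m \<le> n"
  shows "card (S0 n m t r i) \<le> (n - t * m) + t * (r + 1)"
proof -
  define B where "B = {b. b < m \<and> cd m i b \<le> r}"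
  have sub: "S0 n m t r i \<subseteq> {t * m + 1..n} \<union> (\<Union>b\<in>B. {b * t + 1 .. b * t + t})"
  proof
    fix f assume f: "f \<in> S0 n m t r i"
    show "f \<in> {t * m + 1..n} \<union> (\<Union>b\<in>B. {b * t + 1 .. b * t + t})"
    proof (cases "t * m < f")
      case True then show ?thesis using f by (auto simp: S0_def)
    next
      case False
      then have f1: "f \<ge> 1" "f \<le> t * m" "cd m i ((f - 1) div t) \<le> r" using f by (auto simp: S0_def)
      then have "(f - 1) div t \<in> B" using blk_lt[OF assms(1) f1(1,2)] by (simp add: B_def)
      moreover have "f \<in> {(f - 1) div t * t + 1 .. (f - 1) div t * t + t}" using blk[OF assms(1) f1(1)] .
      ultimately show ?thesis by blast
    qed
  qed
  have fB: "finite B" by (simp add: B_def)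
  have injB: "inj_on (cd m i) B"
  proof (rule inj_onI)
    fix x y assume "x \<in> B" "y \<in> B" "cd m i x = cd m i y"
    then have "x < m" "y < m" "cd m i x = cd m i y" by (auto simp: B_def)
    then show "x = y" using assms(2) unfolding cd_def by (simp split: if_splits)
  qed
  have "cd m i ` B \<subseteq> {0..r}" by (auto simp: B_def)
  then have "card (cd m i ` B) \<le> card {0..r}" by (intro card_mono) auto
  then have "card (cd m i ` B) \<le> r + 1" by simp
  then have cB: "card B \<le> r + 1" using card_image[OF injB] by simp
  have "card (S0 n m t r i) \<le> card ({t * m + 1..n} \<union> (\<Union>b\<in>B. {b * t + 1 .. b * t + t}))"
    using sub fB by (intro card_mono) auto
  also have "\<dots> \<le> card {t * m + 1..n} + card (\<Union>b\<in>B. {b * t + 1 .. b * t + t})" by (rule card_Un_le)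
  also have "card (\<Union>b\<in>B. {b * t + 1 .. b * t + t}) \<le> (\<Sum>b\<in>B. card {b * t + 1 .. b * t + t})"
    by (rule card_UN_le[OF fB])
  also have "\<dots> = card B * t" by simp
  also have "\<dots> \<le> (r + 1) * t" using cB by (rule mult_right_mono) simp
  finally show ?thesis by (simp add: mult.commute)
qed

lemma S0_ECBC:
  fixes n m k t r q :: nat
  assumes t: "t \<ge> 1" and q: "m = q + r" "k \<le> t * q" and n: "t * m \<le> n"
  shows "ECBC n m k t r (S0 n m t r)"
  unfolding ECBC_def
proof (intro conjI)
  show "\<forall>i<m. S0 n m t r i \<subseteq> {1..n}" by (auto simp: S0_def)
next
 show "\<forall>X' J. X' \<subseteq> {1..n} \<and> card X' \<le> k \<and> J \<subseteq> {0..<m} \<and> m - r \<le> card J \<longrightarrow>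
        (\<exists>C. (\<forall>j\<in>J. C j \<subseteq> S0 n m t r j \<and> card (C j) \<le> t) \<and> X' = (\<Union>j\<in>J. C j))"
 proof (intro allI impI)
  fix X' J assume A: "X' \<subseteq> {1..n} \<and> card X' \<le> k \<and> J \<subseteq> {0..<m} \<and> m - r \<le> card J"
  have fX: "finite X'" using A finite_subset by blast
  have fJ: "finite J" using A finite_subset by blast
  have qJ: "q \<le> card J" using A q(1) by simp
  have kJ: "k \<le> t * card J" using q(2) qJ by (meson le_trans mult_le_mono2)
  show "\<exists>C. (\<forall>j\<in>J. C j \<subseteq> S0 n m t r j \<and> card (C j) \<le> t) \<and> X' = (\<Union>j\<in>J. C j)"
  proof (rule cap_hall[OF fX fJ], intro allI impI)
    fix Z assume Z: "Z \<subseteq> X'"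
    define H where "H = {s\<in>J. \<exists>x\<in>Z. x \<in> S0 n m t r s}"
    have fH: "finite H" using fJ by (simp add: H_def)
    have cZ: "card Z \<le> k" using Z A fX by (meson card_mono le_trans)
    have fZ: "finite Z" using Z fX finite_subset by blast
    show "card Z \<le> t * card H"
    proof (cases "\<exists>x\<in>Z. t * m < x")
      case True
      then obtain x where x: "x \<in> Z" "t * m < x" by blast
      then have "x \<in> {1..n}" using Z A by blast
      then have "\<forall>s\<in>J. x \<in> S0 n m t r s" using x by (auto simp: S0_def)
      then have "H = J" using x(1) unfolding H_def by blast
      then show ?thesis using cZ kJ by simp
    next
      case False
      show ?thesis
      proof (cases "Z = {}")
        case True then show ?thesis by simp
      next
        case Zne: False
        have Zb: "\<And>x. x \<in> Z \<Longrightarrow> 1 \<le> x \<and> x \<le> t * m \<and> x \<le> n" using False Z A by force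
        define P where "P = (\<lambda>x. (x - 1) div t) ` Z"
        have Pm: "P \<subseteq> {0..<m}" using Zb blk_lt[OF t] by (auto simp: P_def)
        have Pne: "P \<noteq> {}" using Zne by (simp add: P_def)
        have fP: "finite P" using fZ by (simp add: P_def)
        have "Z \<subseteq> (\<Union>b\<in>P. {b * t + 1 .. b * t + t})"
        proof
          fix x assume x: "x \<in> Z"
          then have "x \<in> {(x - 1) div t * t + 1 .. (x - 1) div t * t + t}" using blk[OF t] Zb by blast
          then show "x \<in> (\<Union>b\<in>P. {b * t + 1 .. b * t + t})" using x by (auto simp: P_def)
        qed
        then have "card Z \<le> card (\<Union>b\<in>P. {b * t + 1 .. b * t + t})" using fP by (intro card_mono) auto
        also have "\<dots> \<le> (\<Sum>b\<in>P. card {b * t + 1 .. b * t + t})" by (rule card_UN_le[OF fP])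
        also have "\<dots> = t * card P" by simp
        finally have cZP: "card Z \<le> t * card P" .
        define N where "N = {s. s < m \<and> (\<exists>b\<in>P. cd m s b \<le> r)}"
        have JNH: "J \<inter> N \<subseteq> H"
        proof
          fix s assume s: "s \<in> J \<inter> N"
          then obtain b where b: "b \<in> P" "cd m s b \<le> r" by (auto simp: N_def)
          then obtain x where x: "x \<in> Z" "b = (x - 1) div t" by (auto simp: P_def)
          then have "x \<in> S0 n m t r s" using Zb[OF x(1)] b by (auto simp: S0_def)
          then show "s \<in> H" using s x by (auto simp: H_def)
        qed
        then have cJN: "card (J \<inter> N) \<le> card H" using fH by (rule card_mono[rotated])
        have ss: "N = {0..<m} \<or> card P + r \<le> card N" using sumset[OF Pm Pne, of r] by (simp add: N_def)
        show ?thesis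
        proof (cases "N = {0..<m}")
          case True
          then have "J \<inter> N = J" using A by blast
          then have "t * card J \<le> t * card H" using cJN by simp
          then show ?thesis using cZ kJ by linarith
        next
          case False
          then have cPN: "card P + r \<le> card N" using ss by blast
          have fN: "finite N" by (simp add: N_def)
          have "card N = card (N \<inter> J) + card (N - J)"
            using fN by (metis card_Un_disjoint Diff_disjoint Int_Diff_Un finite_Diff finite_Int inf_commute Int_Diff_disjoint)
          moreover have "card (N - J) \<le> r"
          proof -
            have "N - J \<subseteq> {0..<m} - J" by (auto simp: N_def)
            then have "card (N - J) \<le> card ({0..<m} - J)" by (intro card_mono) auto
            also have "\<dots> = m - card J" using A by (simp add: card_Diff_subset fJ)
            finally show ?thesis using A by linarith
          qed
          ultimately have "card P \<le> card (J \<inter> N)" using cPN by (simp add: Int_commute)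
          then have "t * card P \<le> t * card H" using cJN by simp
          then show ?thesis using cZP by linarith
        qed
      qed
    qed
  qed
 qed
qed

theorem theorem6:
  fixes n m k t r :: nat
  assumes "n \<ge> 1" and "m \<ge> 1" and "k \<ge> 1" and "t \<ge> 1"
    and "m = (k + t - 1) div t + r"
    and "n \<ge> t * m"
  shows "min_storage n m k t r = m * (n - t * (m - r - 1)) \<and>
         min_storage n m k t r = t * m * (r + 1) + m * (n - t * m)"
proof -
  define q where "q = (k + t - 1) div t"
  have mq: "m = q + r" using assms(5) q_def by simp
  have e: "t * q + (k + t - 1) mod t = k + t - 1" unfolding q_def by (metis div_mult_mod_eq mult.commute)
  have "(k + t - 1) mod t < t" using assms(4) by simp
  then have kq: "k \<le> t * q" using e assms(3,4) by linarith
  then have q1: "q \<ge> 1" using assms(3) by (cases q) auto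
  have "t * (q - 1) = t * q - t" by (simp add: diff_mult_distrib2)
  then have kq1: "t * (q - 1) < k" using e assms(3,4) by linarith
  have tm: "t * m = t * (q - 1) + t * (r + 1)" using mq q1 by (metis add_mult_distrib2 le_add_diff_inverse2 add.assoc add.commute)
  define V where "V = m * (n - t * (q - 1))"
  have cardeq: "n - t * (q - 1) = (n - t * m) + t * (r + 1)" using tm assms(6) by linarith
  have LB: "V \<le> storage m S" if "ECBC n m k t r S" for S
  proof -
    have "V = (\<Sum>i<m. n - t * (q - 1))" by (simp add: V_def)
    also have "\<dots> \<le> (\<Sum>i<m. card (S i))"
      using lower_bound[OF that _ mq q1 kq1] by (intro sum_mono) simp
    finally show ?thesis by (simp add: storage_def)
  qed
  have E0: "ECBC n m k t r (S0 n m t r)" using S0_ECBC[OF assms(4) mq kq assms(6)] .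
  have "storage m (S0 n m t r) \<le> V"
  proof -
    have "storage m (S0 n m t r) = (\<Sum>i<m. card (S0 n m t r i))" by (simp add: storage_def)
    also have "\<dots> \<le> (\<Sum>i<m. n - t * (q - 1))"
      using card_S0[OF assms(4) _ assms(6)] cardeq by (intro sum_mono) simp
    also have "\<dots> = V" by (simp add: V_def)
    finally show ?thesis .
  qed
  then have st: "storage m (S0 n m t r) = V" using LB[OF E0] by simp
  have ms: "min_storage n m k t r = V"
    unfolding min_storage_def
  proof (rule Least_equality)
    show "\<exists>S. ECBC n m k t r S \<and> storage m S = V" using E0 st by blast
  next
    fix y assume "\<exists>S. ECBC n m k t r S \<and> storage m S = y"
    then show "V \<le> y" using LB by blast
  qed
  have "m - r - 1 = q - 1" using mq by simp
  then have c1: "min_storage n m k t r = m * (n - t * (m - r - 1))" using ms by (simp add: V_def)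
  have "V = m * (n - t * m) + m * (t * (r + 1))" unfolding V_def cardeq by (simp add: add_mult_distrib2)
  then have c2: "min_storage n m k t r = t * m * (r + 1) + m * (n - t * m)" using ms by (simp add: algebra_simps)
  show ?thesis using c1 c2 by blast
qed

end
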